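(* Let $p$ be a prime and $f:\mathbb{Z}_p\times\mathbb{Z}_p\to\mathbb{Z}_p$. (i) If $f$ is additively separable, then the functional box $P^f$ is local. (ii) If $f$ is additively inseparable, then $P^f\leftrightarrow PR_p$, i.e. $P^f\to PR_p$ and $PR_p\to P^f$.
   Context: Let $p$ be a prime. All arithmetic on elements of $\mathbb{Z}_p$ is modulo $p$. A box is a conditional probability distribution $P(a,b\mid x,y)$ with $a,b,x,y\in\mathbb{Z}_p$. It is shared by Alice, who supplies $x$ and receives $a$, and Bob, who supplies $y$ and receives $b$. Different copies of a box act independently. For $j\in\mathbb{Z}_p$, the box $PR_{p,j}$ is defined by $PR_{p,j}(a,b\mid x,y)=1/p$ if $a-b=xy-j$, and $0$ otherwise. We write $PR_p:=PR_{p,0}$. For $f:\mathbb{Z}_p\times\mathbb{Z}_p\to\mathbb{Z}_p$, the functional box is defined by $P^f(a,b\mid x,y)=1/p$ if $a-b=f(x,y)$, and $0$ otherwise. A function $f$ is additively separable if there exist $g,h:\mathbb{Z}_p\to\mathbb{Z}_p$ with $f(x,y)=g(x)+h(y)$ for all $x,y$. Otherwise $f$ is additively inseparable. A box is local if Alice and Bob can reproduce its distribution exactly using only shared randomness and local processing, without communication. $P_1\to P_2$ means the following. For some $N\ge1$, Alice and Bob, using shared randomness, $N$ copies of $P_1$, and local processing but no communication, can exactly produce outputs distributed as $P_2(a,b\mid x,y)$ for every input pair $(x,y)$. Here each party's inputs to the boxes may depend on their own input, the shared randomness, and their own previously obtained box outputs. $P_1\leftrightarrow P_2$ means $P_1\to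 P_2$ and $P_2\to P_1$. *)

theory Defs
  imports "HOL-Probability.Probability"
begin

text \<open>Elements of Z_p are represented by naturals in {0..<p}; arithmetic is modulo p.
A box is a function P a b x y (probability of outputs a,b given inputs x,y).\<close>

type_synonym box = "nat \<Rightarrow> nat \<Rightarrow> nat \<Rightarrow> nat \<Rightarrow> real"

definition PR_box :: "nat \<Rightarrow> nat \<Rightarrow> box" where
  "PR_box p j a b x y =
     (if (int a - int b) mod int p = (int x * int y - int j) mod int p then 1 / real p else 0)"

abbreviation PR :: "nat \<Rightarrow> box" where
  "PR p \<equiv> PR_box p 0"

definition functional_box :: "nat \<Rightarrow> (nat \<Rightarrow> nat \<Rightarrow> nat) \<Rightarrow> box" where
  "functional_box p f a b x y =
     (if (int a - int b) mod int p = int (f x y) mod int p then 1 / real p else 0)"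

definition add_separable :: "nat \<Rightarrow> (nat \<Rightarrow> nat \<Rightarrow> nat) \<Rightarrow> bool" where
  "add_separable p f \<longleftrightarrow>
     (\<exists>g h :: nat \<Rightarrow> nat. \<forall>x<p. \<forall>y<p. int (f x y) mod int p = (int (g x) + int (h y)) mod int p)"

text \<open>Local box: reproducible from shared randomness (a discrete distribution mu)
and deterministic local processing (private randomness is absorbed into mu).\<close>

definition local_box :: "nat \<Rightarrow> box \<Rightarrow> bool" where
  "local_box p P \<longleftrightarrow>
     (\<exists>(mu :: nat pmf) (A :: nat \<Rightarrow> nat \<Rightarrow> nat) (B :: nat \<Rightarrow> nat \<Rightarrow> nat).
        (\<forall>l x. x < p \<longrightarrow> A l x < p) \<and> (\<forall>l y. y < p \<longrightarrow> B l y < p) \<and>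
        (\<forall>a<p. \<forall>b<p. \<forall>x<p. \<forall>y<p.
            P a b x y = measure_pmf.prob mu {l. A l x = a \<and> B l y = b}))"

definition zp_lists :: "nat \<Rightarrow> nat \<Rightarrow> nat list set" where
  "zp_lists p N = {xs. length xs = N \<and> set xs \<subseteq> {0..<p}}"

text \<open>Alice feeds the k-th copy with
ain l x (outputs of copies 0..k-1), Bob likewise; final outputs are aout/bout.\<close>

definition wiring_prob ::
  "box \<Rightarrow> nat \<Rightarrow> nat \<Rightarrow>
   (nat \<Rightarrow> nat \<Rightarrow> nat list \<Rightarrow> nat) \<Rightarrow> (nat \<Rightarrow> nat \<Rightarrow> nat list \<Rightarrow> nat) \<Rightarrow>
   (nat \<Rightarrow> nat \<Rightarrow> nat list \<Rightarrow> nat) \<Rightarrow> (nat \<Rightarrow> nat \<Rightarrow> nat list \<Rightarrow> nat) \<Rightarrow>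
   nat \<Rightarrow> nat \<Rightarrow> nat \<Rightarrow> nat \<Rightarrow> nat \<Rightarrow> real" where
  "wiring_prob P1 p N ain aout bin bout l a b x y =
     (\<Sum>as\<in>zp_lists p N. \<Sum>bs\<in>zp_lists p N.
        (if aout l x as = a \<and> bout l y bs = b
         then (\<Prod>k<N. P1 (as ! k) (bs ! k) (ain l x (take k as)) (bin l y (take k bs)))
         else 0))"

definition simulates :: "nat \<Rightarrow> box \<Rightarrow> box \<Rightarrow> bool" where
  "simulates p P1 P2 \<longleftrightarrow>
     (\<exists>(N :: nat) (mu :: nat pmf) ain aout bin bout.
        N \<ge> 1 \<and>
        (\<forall>l x as. x < p \<longrightarrow> set as \<subseteq> {0..<p} \<longrightarrow> ain l x as < p \<and> aout l x as < p) \<and>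
        (\<forall>l y bs. y < p \<longrightarrow> set bs \<subseteq> {0..<p} \<longrightarrow> bin l y bs < p \<and> bout l y bs < p) \<and>
        (\<forall>a<p. \<forall>b<p. \<forall>x<p. \<forall>y<p.
            P2 a b x y =
              measure_pmf.expectation mu (\<lambda>l. wiring_prob P1 p N ain aout bin bout l a b x y)))"

definition box_equiv :: "nat \<Rightarrow> box \<Rightarrow> box \<Rightarrow> bool" where
  "box_equiv p P1 P2 \<longleftrightarrow> simulates p P1 P2 \<and> simulates p P2 P1"

end

theory Submission
  imports Defs
begin


lemma zp_fin: "finite (zp_lists p N)"
proof -
  have "zp_lists p N = {xs. set xs \<subseteq> {0..<p} \<and> length xs = N}"
    unfolding zp_lists_def by auto
  thus ?thesis using finite_lists_length_eq[of "{0..<p}" N] by simp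
qed

lemma zp_card: "card (zp_lists p N) = p ^ N"
proof -
  have "zp_lists p N = {xs. set xs \<subseteq> {0..<p} \<and> length xs = N}"
    unfolding zp_lists_def by auto
  thus ?thesis using card_lists_length_eq[of "{0..<p}" N] by simp
qed

lemma zp_Suc: "zp_lists p (Suc N) = (\<lambda>(a,as). a#as) ` ({0..<p} \<times> zp_lists p N)"
  unfolding zp_lists_def
  by (auto simp: image_iff length_Suc_conv)

lemma sum_zp_Suc: "sum F (zp_lists p (Suc N)) = (\<Sum>a<p. \<Sum>as\<in>zp_lists p N. F (a#as))"
proof -
  have inj: "inj_on (\<lambda>(a,as). a#as) ({0..<p} \<times> zp_lists p N)"
    by (auto simp: inj_on_def)
  have "sum F (zp_lists p (Suc N)) = sum (F \<circ> (\<lambda>(a,as). a#as)) ({0..<p} \<times> zp_lists p N)"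
    unfolding zp_Suc by (rule sum.reindex[OF inj])
  also have "\<dots> = (\<Sum>a\<in>{0..<p}. \<Sum>as\<in>zp_lists p N. F (a#as))"
    by (simp add: sum.cartesian_product comp_def case_prod_unfold)
  finally show ?thesis by (simp add: lessThan_atLeast0)
qed


definition qb :: "nat \<Rightarrow> nat \<Rightarrow> nat \<Rightarrow> int \<Rightarrow> real" where
  "qb p u v e = (if (int u - int v) mod int p = e mod int p then 1 / real p else 0)"

lemma zp_0: "zp_lists p 0 = {[]}" unfolding zp_lists_def by auto

lemma sum_qb:
  assumes p: "p > 0" and K: "\<And>z. K z = K (z mod int p)"
  shows "(\<Sum>b<p. qb p a b e * K (int b)) = K (int a - e) / real p"
proof -
  define r where "r = (int a - e) mod int p"
  have r0: "0 \<le> r" "r < int p" using p by (auto simp: r_def)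
  have eq: "((int a - int b) mod int p = e mod int p) \<longleftrightarrow> b = nat r" if "b < p" for b
  proof -
    have "((int a - int b) mod int p = e mod int p) \<longleftrightarrow> int b mod int p = r"
      unfolding r_def by (metis mod_diff_cong diff_diff_eq2 diff_add_cancel mod_add_eq add.commute)
    also have "int b mod int p = int b" using that by simp
    finally show ?thesis using r0 by auto
  qed
  have "(\<Sum>b<p. qb p a b e * K (int b)) = (\<Sum>b<p. if b = nat r then K (int b) / real p else 0)"
    by (rule sum.cong) (auto simp: qb_def eq)
  also have "\<dots> = K r / real p" using r0 by (simp add: sum.delta)
  also have "K r = K (int a - e)" using K[of "int a - e"] by (simp add: r_def)
  finally show ?thesis .
qed

lemma lemmaA:
  assumes p: "p > 0" and hper: "\<And>u v. h u v = h (u mod int p) (v mod int p)"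
  shows "(\<Sum>as\<in>zp_lists p N. \<Sum>bs\<in>zp_lists p N.
            h (int (sum_list as)) (int (sum_list bs)) * (\<Prod>k<N. qb p (as!k) (bs!k) (d k)))
         = (1/real p)^N * (\<Sum>as\<in>zp_lists p N. h (int (sum_list as)) (int (sum_list as) - (\<Sum>k<N. d k)))"
  using hper
proof (induction N arbitrary: d h)
  case 0
  then show ?case by (simp add: zp_0)
next
  case (Suc N)
  let ?L = "zp_lists p N"
  define D where "D = (\<Sum>k<N. d (Suc k))"
  have "(\<Sum>as\<in>zp_lists p (Suc N). \<Sum>bs\<in>zp_lists p (Suc N).
            h (int (sum_list as)) (int (sum_list bs)) * (\<Prod>k<Suc N. qb p (as!k) (bs!k) (d k)))
      = (\<Sum>a<p. \<Sum>as\<in>?L. \<Sum>b<p. \<Sum>bs\<in>?L.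
            h (int a + int (sum_list as)) (int b + int (sum_list bs)) *
            (qb p a b (d 0) * (\<Prod>k<N. qb p (as!k) (bs!k) (d (Suc k)))))"
    unfolding sum_zp_Suc prod.lessThan_Suc_shift by simp
  also have "\<dots> = (\<Sum>a<p. \<Sum>b<p. qb p a b (d 0) * (\<Sum>as\<in>?L. \<Sum>bs\<in>?L.
            (\<lambda>u v. h (int a + u) (int b + v)) (int (sum_list as)) (int (sum_list bs)) *
            (\<Prod>k<N. qb p (as!k) (bs!k) (d (Suc k)))))"
    apply (rule sum.cong, simp)
    apply (subst sum.swap[where A="zp_lists p N" and B="{..<p}"])
    by (simp add: sum_distrib_left algebra_simps)
  also have "\<dots> = (\<Sum>a<p. \<Sum>b<p. qb p a b (d 0) * ((1/real p)^N *
        (\<Sum>as\<in>?L. h (int a + int (sum_list as)) (int b + (int (sum_list as) - D)))))"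
  proof -
    have "(\<Sum>as\<in>?L. \<Sum>bs\<in>?L.
            (\<lambda>u v. h (int a + u) (int b + v)) (int (sum_list as)) (int (sum_list bs)) *
            (\<Prod>k<N. qb p (as!k) (bs!k) (d (Suc k))))
       = (1/real p)^N * (\<Sum>as\<in>?L. h (int a + int (sum_list as)) (int b + (int (sum_list as) - D)))"
      for a b
    proof -
      have per: "\<And>u v. h (int a + u) (int b + v) = h (int a + u mod int p) (int b + v mod int p)"
        by (metis Suc.prems mod_add_right_eq)
      show ?thesis
        using Suc.IH[of "\<lambda>u v. h (int a + u) (int b + v)" "\<lambda>k. d (Suc k)"] per
        by (simp add: D_def)
    qed
    thus ?thesis by simp
  qed
  also have "\<dots> = (\<Sum>a<p. (\<lambda>z. (1/real p)^N *
        (\<Sum>as\<in>?L. h (int a + int (sum_list as)) (z + (int (sum_list as) - D)))) (int a - d 0) / real p)"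
  proof (rule sum.cong, simp)
    fix a
    let ?K = "\<lambda>z. (1/real p)^N *
        (\<Sum>as\<in>?L. h (int a + int (sum_list as)) (z + (int (sum_list as) - D)))"
    have K: "?K z = ?K (z mod int p)" for z
    proof -
      have "h (int a + int (sum_list as)) (z + (int (sum_list as) - D)) =
            h (int a + int (sum_list as)) (z mod int p + (int (sum_list as) - D))" for as
        by (metis Suc.prems mod_add_left_eq)
      thus ?thesis by simp
    qed
    show "(\<Sum>b<p. qb p a b (d 0) * ?K (int b)) = ?K (int a - d 0) / real p"
      by (rule sum_qb[where K="?K", OF p K])
  qed
  also have "\<dots> = (1/real p)^(Suc N) * (\<Sum>a<p. \<Sum>as\<in>?L.
        h (int a + int (sum_list as)) (int a + int (sum_list as) - (d 0 + D)))"
    by (simp add: sum_distrib_left algebra_simps sum_divide_distrib)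
  also have "\<dots> = (1/real p)^(Suc N) * (\<Sum>as\<in>zp_lists p (Suc N).
        h (int (sum_list as)) (int (sum_list as) - (\<Sum>k<Suc N. d k)))"
    unfolding sum_zp_Suc sum.lessThan_Suc_shift D_def by (simp add: algebra_simps)
  finally show ?case .
qed


lemma shift_sum:
  assumes p: "p > 0" and cop: "coprime w (int p)" and G: "\<And>z. G z = G (z mod int p)"
  shows "(\<Sum>r<p. G (w * int r + c)) = (\<Sum>r<p. G (int r))"
proof -
  define \<phi> where "\<phi> r = nat ((w * int r + c) mod int p)" for r
  have img: "\<phi> ` {..<p} \<subseteq> {..<p}" using p by (auto simp: \<phi>_def nat_less_iff)
  have inj: "inj_on \<phi> {..<p}"
  proof (rule inj_onI)
    fix x y assume x: "x \<in> {..<p}" and y: "y \<in> {..<p}" and e: "\<phi> x = \<phi> y"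
    have "(w * int x + c) mod int p = (w * int y + c) mod int p"
      using e p unfolding \<phi>_def by (simp add: nat_eq_iff2)
    hence "int p dvd (w * int x + c) - (w * int y + c)" by (simp add: mod_eq_dvd_iff)
    hence "int p dvd w * (int x - int y)" by (simp add: algebra_simps)
    hence d: "int p dvd (int x - int y)"
      using cop by (metis coprime_commute coprime_dvd_mult_right_iff)
    hence "int x mod int p = int y mod int p" by (simp add: mod_eq_dvd_iff)
    thus "x = y" using x y by simp
  qed
  have bij: "\<phi> ` {..<p} = {..<p}" by (rule endo_inj_surj[OF _ img inj]) simp
  have "(\<Sum>r<p. G (int r)) = (\<Sum>r\<in>\<phi> ` {..<p}. G (int r))" by (simp add: bij)
  also have "\<dots> = (\<Sum>r<p. G (int (\<phi> r)))" by (simp add: sum.reindex[OF inj])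
  also have "\<dots> = (\<Sum>r<p. G (w * int r + c))"
    by (rule sum.cong) (use p G in \<open>auto simp: \<phi>_def\<close>)
  finally show ?thesis by simp
qed

lemma lemmaB:
  assumes p: "p > 0" and g: "\<And>z. g z = g (z mod int p)"
  shows "(\<Sum>as\<in>zp_lists p (Suc M). g (int (sum_list as))) = real p ^ M * (\<Sum>r<p. g (int r))"
proof -
  have "(\<Sum>as\<in>zp_lists p (Suc M). g (int (sum_list as)))
      = (\<Sum>as\<in>zp_lists p M. \<Sum>a<p. g (1 * int a + int (sum_list as)))"
    unfolding sum_zp_Suc by (subst sum.swap) simp
  also have "\<dots> = (\<Sum>as\<in>zp_lists p M. \<Sum>r<p. g (int r))"
    by (rule sum.cong[OF refl], rule shift_sum[where G=g and w=1, OF p _ g]) simp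
  also have "\<dots> = real p ^ M * (\<Sum>r<p. g (int r))" by (simp add: zp_card)
  finally show ?thesis .
qed

lemma final_sum:
  assumes p: "p > 0" and a: "a < p" and b: "b < p"
  shows "(\<Sum>r<p. (if (int r + s) mod int p = int a \<and> (int r - E) mod int p = int b then 1 else 0 :: real))
     = (if (int a - int b) mod int p = (s + E) mod int p then 1 else 0)"
proof -
  define r0 where "r0 = nat ((int a - s) mod int p)"
  have r0: "r0 < p" "int r0 = (int a - s) mod int p" using p by (auto simp: r0_def nat_less_iff)
  have e1: "((int r + s) mod int p = int a) \<longleftrightarrow> r = r0" if "r < p" for r
  proof
    assume h: "(int r + s) mod int p = int a"
    have "int r = int r mod int p" using that by simp
    also have "\<dots> = (int r + s - s) mod int p" by simp
    also have "\<dots> = ((int r + s) mod int p - s) mod int p" by (simp add: mod_diff_left_eq)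
    also have "\<dots> = int r0" using h r0 by simp
    finally show "r = r0" by simp
  next
    assume "r = r0"
    thus "(int r + s) mod int p = int a" using r0 a
      by (simp add: mod_add_left_eq)
  qed
  have e2: "((int r0 - E) mod int p = int b) \<longleftrightarrow> ((int a - int b) mod int p = (s + E) mod int p)"
  proof -
    have "(int r0 - E) mod int p = (int a - s - E) mod int p" using r0 by (simp add: mod_diff_left_eq)
    hence "((int r0 - E) mod int p = int b) \<longleftrightarrow> (int a - s - E) mod int p = int b mod int p"
      using b by simp
    also have "\<dots> \<longleftrightarrow> (int a - (s + E)) mod int p = int b mod int p" by (simp add: algebra_simps)
    also have "\<dots> \<longleftrightarrow> (int a - int b) mod int p = (s + E) mod int p"
      by (simp add: mod_eq_dvd_iff algebra_simps)
    finally show ?thesis .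
  qed
  have "(\<Sum>r<p. (if (int r + s) mod int p = int a \<and> (int r - E) mod int p = int b then 1 else 0 :: real))
      = (\<Sum>r<p. if r = r0 then (if (int r0 - E) mod int p = int b then 1 else 0) else 0)"
    by (rule sum.cong) (auto simp: e1)
  also have "\<dots> = (if (int r0 - E) mod int p = int b then 1 else 0)" using r0 by (simp add: sum.delta)
  finally show ?thesis using e2 by simp
qed


lemma mod_lin: "(w * (u mod int p) + c) mod int p = (w * u + c) mod int p"
  by (metis mod_add_left_eq mod_mult_right_eq)

lemma wiring:
  fixes F :: "nat \<Rightarrow> nat \<Rightarrow> int" and w :: int and s t :: "nat \<Rightarrow> int"
    and \<alpha> \<beta> :: "nat \<Rightarrow> nat \<Rightarrow> nat"
  assumes p: "p > 0" and cop: "coprime w (int p)" and a: "a < p" and b: "b < p"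
  shows "wiring_prob (\<lambda>a b u v. qb p a b (F u v)) p (Suc M)
           (\<lambda>l x as. \<alpha> (length as) x) (\<lambda>l x as. nat ((w * int (sum_list as) + s x) mod int p))
           (\<lambda>l y bs. \<beta> (length bs) y) (\<lambda>l y bs. nat ((w * int (sum_list bs) + t y) mod int p)) l a b x y
       = (if (int a - int b) mod int p = (s x - t y + w * (\<Sum>k<Suc M. F (\<alpha> k x) (\<beta> k y))) mod int p
          then 1 / real p else 0)"
proof -
  define N where "N = Suc M"
  define d where "d k = F (\<alpha> k x) (\<beta> k y)" for k
  define D where "D = (\<Sum>k<N. d k)"
  define h where "h u v = (if (w * u + s x) mod int p = int a \<and> (w * v + t y) mod int p = int b
                           then 1 else 0 :: real)" for u v
  have hper: "h u v = h (u mod int p) (v mod int p)" for u v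
    unfolding h_def mod_lin by simp
  have step1: "wiring_prob (\<lambda>a b u v. qb p a b (F u v)) p N
           (\<lambda>l x as. \<alpha> (length as) x) (\<lambda>l x as. nat ((w * int (sum_list as) + s x) mod int p))
           (\<lambda>l y bs. \<beta> (length bs) y) (\<lambda>l y bs. nat ((w * int (sum_list bs) + t y) mod int p)) l a b x y
     = (\<Sum>as\<in>zp_lists p N. \<Sum>bs\<in>zp_lists p N.
            h (int (sum_list as)) (int (sum_list bs)) * (\<Prod>k<N. qb p (as!k) (bs!k) (d k)))"
    unfolding wiring_prob_def
  proof (rule sum.cong[OF refl], rule sum.cong[OF refl])
    fix as bs assume as: "as \<in> zp_lists p N" and bs: "bs \<in> zp_lists p N"
    have pr: "(\<Prod>k<N. qb p (as ! k) (bs ! k) (F (\<alpha> (length (take k as)) x) (\<beta> (length (take k bs)) y)))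
            = (\<Prod>k<N. qb p (as!k) (bs!k) (d k))"
      by (rule prod.cong[OF refl]) (use as bs in \<open>auto simp: zp_lists_def d_def min_def\<close>)
    have c1: "(nat ((w * int (sum_list as) + s x) mod int p) = a) \<longleftrightarrow>
              (w * int (sum_list as) + s x) mod int p = int a" using p by auto
    have c2: "(nat ((w * int (sum_list bs) + t y) mod int p) = b) \<longleftrightarrow>
              (w * int (sum_list bs) + t y) mod int p = int b" using p by auto
    show "(if nat ((w * int (sum_list as) + s x) mod int p) = a \<and> nat ((w * int (sum_list bs) + t y) mod int p) = b
          then \<Prod>k<N. qb p (as ! k) (bs ! k) (F (\<alpha> (length (take k as)) x) (\<beta> (length (take k bs)) y))
          else 0) =
         h (int (sum_list as)) (int (sum_list bs)) * (\<Prod>k<N. qb p (as ! k) (bs ! k) (d k))"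
      unfolding pr c1 c2 h_def by simp
  qed
  also have "\<dots> = (1/real p)^N * (\<Sum>as\<in>zp_lists p N. h (int (sum_list as)) (int (sum_list as) - D))"
    unfolding D_def by (rule lemmaA[where h=h, OF p hper])
  also have "\<dots> = (1/real p)^N * (real p ^ M * (\<Sum>r<p. h (int r) (int r - D)))"
  proof -
    have g: "h z (z - D) = h (z mod int p) (z mod int p - D)" for z
      by (metis hper mod_diff_left_eq mod_mod_trivial)
    show ?thesis unfolding N_def
      by (subst lemmaB[where g="\<lambda>z. h z (z - D)", OF p g]) simp
  qed
  also have "\<dots> = (1 / real p) * (\<Sum>r<p. h (int r) (int r - D))"
    using p by (simp add: N_def power_divide field_simps)
  also have "(\<Sum>r<p. h (int r) (int r - D))
     = (\<Sum>r<p. (\<lambda>z. if (z + s x) mod int p = int a \<and> (z - (w * D - t y)) mod int p = int b then 1 else 0 :: real) (w * int r + 0))"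
    by (rule sum.cong[OF refl]) (simp add: h_def algebra_simps)
  also have "\<dots> = (\<Sum>r<p. (\<lambda>z. if (z + s x) mod int p = int a \<and> (z - (w * D - t y)) mod int p = int b then 1 else 0 :: real) (int r))"
    by (rule shift_sum[where w=w, OF p cop]) (simp add: mod_add_left_eq mod_diff_left_eq)
  also have "\<dots> = (if (int a - int b) mod int p = (s x + (w * D - t y)) mod int p then 1 else 0)"
    by (rule final_sum[OF p a b])
  finally show ?thesis unfolding N_def D_def d_def by (simp add: algebra_simps)
qed


lemma PR_qb: "PR p = (\<lambda>a b u v. qb p a b (int u * int v))"
  by (intro ext) (simp add: PR_box_def qb_def)

lemma FB_qb: "functional_box p f = (\<lambda>a b u v. qb p a b (int (f u v)))"
  by (intro ext) (simp add: functional_box_def qb_def)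

lemma part1:
  assumes p: "p > 0" and sep: "add_separable p f"
  shows "local_box p (functional_box p f)"
proof -
  obtain g h :: "nat \<Rightarrow> nat" where gh: "\<forall>x<p. \<forall>y<p. int (f x y) mod int p = (int (g x) + int (h y)) mod int p"
    using sep unfolding add_separable_def by blast
  define A where "A l x = (l + g x) mod p" for l x
  define B where "B l y = nat ((int l - int (h y)) mod int p)" for l y
  have AB1: "\<forall>l x. x < p \<longrightarrow> A l x < p" using p by (simp add: A_def)
  have AB2: "\<forall>l y. y < p \<longrightarrow> B l y < p" using p by (simp add: B_def nat_less_iff)
  have main: "functional_box p f a b x y = measure_pmf.prob (pmf_of_set {..<p}) {l. A l x = a \<and> B l y = b}"
    if a: "a < p" and b: "b < p" and x: "x < p" and y: "y < p" for a b x y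
  proof -
    define l0 where "l0 = nat ((int a - int (g x)) mod int p)"
    have l0: "l0 < p" "int l0 = (int a - int (g x)) mod int p" using p by (auto simp: l0_def nat_less_iff)
    have Aiff: "A l x = a \<longleftrightarrow> l = l0" if "l < p" for l
    proof -
      have "A l x = a \<longleftrightarrow> int ((l + g x) mod p) = int a" by (simp add: A_def)
      also have "\<dots> \<longleftrightarrow> (int l + int (g x)) mod int p = int a" by (simp add: zmod_int)
      also have "\<dots> \<longleftrightarrow> int l mod int p = (int a - int (g x)) mod int p"
      proof
        assume "(int l + int (g x)) mod int p = int a"
        hence "(int l + int (g x)) mod int p = int a mod int p" using a by simp
        thus "int l mod int p = (int a - int (g x)) mod int p"
          by (simp add: mod_eq_dvd_iff algebra_simps)
      next
        assume "int l mod int p = (int a - int (g x)) mod int p"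
        hence "(int l + int (g x)) mod int p = int a mod int p"
          by (simp add: mod_eq_dvd_iff algebra_simps)
        thus "(int l + int (g x)) mod int p = int a" using a by simp
      qed
      also have "\<dots> \<longleftrightarrow> l = l0" using that l0 by auto
      finally show ?thesis .
    qed
    have Bl0: "B l0 y = b \<longleftrightarrow> (int a - int b) mod int p = int (f x y) mod int p"
    proof -
      have "B l0 y = b \<longleftrightarrow> (int l0 - int (h y)) mod int p = int b"
        using p by (auto simp: B_def)
      also have "\<dots> \<longleftrightarrow> (int a - int (g x) - int (h y)) mod int p = int b mod int p"
        using l0 b by (simp add: mod_diff_left_eq)
      also have "\<dots> \<longleftrightarrow> (int a - int b) mod int p = (int (g x) + int (h y)) mod int p"
        by (simp add: mod_eq_dvd_iff algebra_simps)
      also have "\<dots> \<longleftrightarrow> (int a - int b) mod int p = int (f x y) mod int p"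
        using gh x y by simp
      finally show ?thesis .
    qed
    have set: "{..<p} \<inter> {l. A l x = a \<and> B l y = b} =
          (if (int a - int b) mod int p = int (f x y) mod int p then {l0} else {})"
      using Aiff Bl0 l0 by auto
    have m: "measure_pmf.prob (pmf_of_set {..<p}) S = real (card ({..<p} \<inter> S)) / real p" for S
      by (subst measure_pmf_of_set) (use p in auto)
    show ?thesis
      unfolding m set by (simp add: functional_box_def)
  qed
  show ?thesis unfolding local_box_def
    using AB1 AB2 main by blast
qed

lemma part2a:
  assumes p2: "p \<ge> 2"
  shows "simulates p (PR p) (functional_box p f)"
proof -
  have p: "p > 0" using p2 by simp
  obtain M where M: "p = Suc M" using p by (cases p) auto
  define \<alpha> where "\<alpha> k x = f x k mod p" for k x :: nat
  define \<beta> where "\<beta> k y = (if y = k then 1 else 0 :: nat)" for k y :: nat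
  show ?thesis unfolding simulates_def
  proof (intro exI conjI allI impI)
    show "1 \<le> p" using p by simp
    show "(\<lambda>l x as. \<alpha> (length as) x) l x as < p" for l x as using p by (simp add: \<alpha>_def)
    show "(\<lambda>l x as. nat ((1 * int (sum_list as) + 0) mod int p)) l x as < p" for l x as
      using p by (simp add: nat_less_iff)
    show "(\<lambda>l y bs. \<beta> (length bs) y) l y bs < p" for l y bs using p2 by (simp add: \<beta>_def)
    show "(\<lambda>l y bs. nat ((1 * int (sum_list bs) + 0) mod int p)) l y bs < p" for l y bs
      using p by (simp add: nat_less_iff)
    fix a b x y assume a: "a < p" and b: "b < p" and x: "x < p" and y: "y < p"
    have sumk: "(\<Sum>k<p. int (\<alpha> k x) * int (\<beta> k y)) = int (f x y mod p)"
    proof -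
      have "(\<Sum>k<p. int (\<alpha> k x) * int (\<beta> k y)) = (\<Sum>k<p. if k = y then int (f x y mod p) else 0)"
        by (rule sum.cong) (auto simp: \<alpha>_def \<beta>_def)
      thus ?thesis using y by (simp add: sum.delta)
    qed
    show "functional_box p f a b x y =
      measure_pmf.expectation (return_pmf 0)
       (\<lambda>l. wiring_prob (PR p) p p (\<lambda>l x as. \<alpha> (length as) x)
              (\<lambda>l x as. nat ((1 * int (sum_list as) + 0) mod int p))
              (\<lambda>l y bs. \<beta> (length bs) y)
              (\<lambda>l y bs. nat ((1 * int (sum_list bs) + 0) mod int p)) l a b x y)"
      unfolding expectation_return_pmf PR_qb
      using wiring[where F="\<lambda>u v. int u * int v" and w=1 and s="\<lambda>_. 0" and t="\<lambda>_. 0"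
          and \<alpha>=\<alpha> and \<beta>=\<beta> and M=M, OF p _ a b] M sumk
      by (simp add: functional_box_def zmod_int)
  qed
qed


lemma sum_lessThan_add_split: fixes n m :: nat shows "(\<Sum>k<n+m. F k) = (\<Sum>k<n. F k) + (\<Sum>j<m. F (n + j))"
  by (induction m) (simp_all add: algebra_simps)

lemma double_sum:
  fixes n p :: nat
  assumes p: "p > 0"
  shows "(\<Sum>k<n*p. G (k div p) (k mod p)) = (\<Sum>i<n. \<Sum>j<p. G i j :: int)"
proof (induction n)
  case 0 then show ?case by simp
next
  case (Suc n)
  have "(\<Sum>k<Suc n * p. G (k div p) (k mod p)) = (\<Sum>k<n*p + p. G (k div p) (k mod p))"
    by (simp add: algebra_simps)
  also have "\<dots> = (\<Sum>k<n*p. G (k div p) (k mod p)) + (\<Sum>j<p. G ((n*p+j) div p) ((n*p+j) mod p))"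
    by (rule sum_lessThan_add_split)
  also have "(\<Sum>j<p. G ((n*p+j) div p) ((n*p+j) mod p)) = (\<Sum>j<p. G n j)"
    by (rule sum.cong) (use p in auto)
  finally show ?case using Suc by simp
qed

lemma count_less:
  assumes "x \<le> p"
  shows "(\<Sum>i<p. (if i < x then 1 else 0 :: int)) = int x"
proof -
  have "(\<Sum>i<p. (if i < x then 1 else 0 :: int)) = (\<Sum>i\<in>{i\<in>{..<p}. i < x}. 1)"
    by (rule sum.inter_filter[symmetric]) simp
  also have "{i\<in>{..<p}. i < x} = {..<x}" using assms by auto
  finally show ?thesis by simp
qed

lemma insep_witness:
  assumes p: "p > 0" and ns: "\<not> add_separable p f"
  shows "\<exists>X<p. \<exists>Y<p. (int (f X Y) - int (f X 0) - int (f 0 Y) + int (f 0 0)) mod int p \<noteq> 0"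
proof (rule ccontr)
  assume "\<not> ?thesis"
  hence z: "\<forall>X<p. \<forall>Y<p. (int (f X Y) - int (f X 0) - int (f 0 Y) + int (f 0 0)) mod int p = 0" by auto
  have "add_separable p f" unfolding add_separable_def
  proof (intro exI allI impI)
    fix x y assume x: "x < p" and y: "y < p"
    have d: "int p dvd (int (f x y) - int (f x 0) - int (f 0 y) + int (f 0 0))" using z x y by auto
    have e: "int (f x 0 + (p - 1) * f 0 0) = int (f x 0) + (int p - 1) * int (f 0 0)"
      using p by (simp add: of_nat_diff)
    have eqn: "int (f x y) - (int (f x 0 + (p - 1) * f 0 0) + int (f 0 y)) =
          (int (f x y) - int (f x 0) - int (f 0 y) + int (f 0 0)) - int p * int (f 0 0)"
      unfolding e by (simp add: algebra_simps)
    have d2: "int p dvd (int (f x y) - int (f x 0) - int (f 0 y) + int (f 0 0)) - int p * int (f 0 0)"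
      using d by (intro dvd_diff) simp_all
    have "int p dvd int (f x y) - (int (f x 0 + (p - 1) * f 0 0) + int (f 0 y))"
      unfolding eqn by (rule d2)
    thus "int (f x y) mod int p = (int (f x 0 + (p - 1) * f 0 0) + int (f 0 y)) mod int p"
      by (simp add: mod_eq_dvd_iff)
  qed
  with ns show False by simp
qed

lemma part2b:
  assumes pr: "prime p" and ns: "\<not> add_separable p f"
  shows "simulates p (functional_box p f) (PR p)"
proof -
  have p2: "p \<ge> 2" using pr by (simp add: prime_ge_2_nat)
  hence p: "p > 0" by simp
  obtain X Y where X: "X < p" and Y: "Y < p"
    and cnz: "(int (f X Y) - int (f X 0) - int (f 0 Y) + int (f 0 0)) mod int p \<noteq> 0"
    using insep_witness[OF p ns] by blast
  define c where "c = int (f X Y) - int (f X 0) - int (f 0 Y) + int (f 0 0)"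
  define A where "A = int (f X 0) - int (f 0 0)"
  define B where "B = int (f 0 Y) - int (f 0 0)"
  have "\<not> int p dvd c" using cnz by (simp add: c_def dvd_eq_mod_eq_0)
  hence cop: "coprime (int p) c" using pr by (intro prime_imp_coprime) (simp_all add: prime_nat_int_transfer)
  obtain u m where um: "u * int p + m * c = 1"
    using bezout_int[of "int p" c] cop by (auto simp: coprime_iff_gcd_eq_1)
  have copm: "coprime m (int p)"
  proof (rule coprimeI)
    fix e assume "e dvd m" "e dvd int p"
    hence "e dvd u * int p + m * c" by simp
    thus "is_unit e" using um by simp
  qed
  obtain M where M: "p * p = Suc M" using p by (cases "p*p") auto
  define \<alpha> where "\<alpha> k x = (if k div p < x then X else 0)" for k x :: nat
  define \<beta> where "\<beta> k y = (if k mod p < y then Y else 0)" for k y :: nat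
  show ?thesis unfolding simulates_def
  proof (intro exI conjI allI impI)
    show "1 \<le> p * p" using p by simp
    show "(\<lambda>l x as. \<alpha> (length as) x) l x as < p" for l x as using p X by (simp add: \<alpha>_def)
    show "(\<lambda>l x as. nat ((m * int (sum_list as) + 0) mod int p)) l x as < p" for l x as
      using p by (simp add: nat_less_iff)
    show "(\<lambda>l y bs. \<beta> (length bs) y) l y bs < p" for l y bs using p Y by (simp add: \<beta>_def)
    show "(\<lambda>l y bs. nat ((m * int (sum_list bs) + 0) mod int p)) l y bs < p" for l y bs
      using p by (simp add: nat_less_iff)
    fix a b x y assume a: "a < p" and b: "b < p" and x: "x < p" and y: "y < p"
    define ex where "ex i = (if i < x then 1 else 0 :: int)" for i
    define ey where "ey j = (if j < y then 1 else 0 :: int)" for j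
    have termeq: "int (f (if i < x then X else 0) (if j < y then Y else 0)) =
                int (f 0 0) + ex i * A + ey j * B + ex i * (ey j * c)" for i j
      by (auto simp: ex_def ey_def A_def B_def c_def)
    have D: "(\<Sum>k<p*p. int (f (\<alpha> k x) (\<beta> k y))) =
             int p * (int p * int (f 0 0) + int x * A + int y * B) + int x * int y * c"
    proof -
      have "(\<Sum>k<p*p. int (f (\<alpha> k x) (\<beta> k y)))
          = (\<Sum>i<p. \<Sum>j<p. int (f (if i < x then X else 0) (if j < y then Y else 0)))"
        unfolding \<alpha>_def \<beta>_def by (rule double_sum[OF p])
      also have "\<dots> = (\<Sum>i<p. \<Sum>j<p. int (f 0 0) + ex i * A + ey j * B + ex i * (ey j * c))"
        by (simp add: termeq)
      also have "\<dots> = (\<Sum>i<p. int p * int (f 0 0) + int p * ex i * A + int y * B + ex i * (int y * c))"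
      proof (rule sum.cong[OF refl])
        fix i
        have sy: "(\<Sum>j<p. ey j) = int y" unfolding ey_def using y by (simp add: count_less)
        show "(\<Sum>j<p. int (f 0 0) + ex i * A + ey j * B + ex i * (ey j * c)) =
              int p * int (f 0 0) + int p * ex i * A + int y * B + ex i * (int y * c)"
          by (simp add: sum.distrib sum_distrib_left[symmetric] sum_distrib_right[symmetric] sy algebra_simps)
      qed
      also have "\<dots> = int p * (int p * int (f 0 0) + int x * A + int y * B) + int x * int y * c"
      proof -
        have sx: "(\<Sum>i<p. ex i) = int x" unfolding ex_def using x by (simp add: count_less)
        show ?thesis
          by (simp add: sum.distrib sum_distrib_left[symmetric] sum_distrib_right[symmetric] sx
                        algebra_simps sum_distrib_left)
      qed
      finally show ?thesis .
    qed
    have key: "(m * (\<Sum>k<p*p. int (f (\<alpha> k x) (\<beta> k y)))) mod int p = (int x * int y) mod int p"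
    proof -
      have "m * (\<Sum>k<p*p. int (f (\<alpha> k x) (\<beta> k y))) - int x * int y =
            int p * (m * (int p * int (f 0 0) + int x * A + int y * B) - u * int x * int y)"
      proof -
        have mc: "m * c = 1 - u * int p" using um by simp
        have "m * (int x * int y * c) = int x * int y * (m * c)" by (simp add: algebra_simps)
        thus ?thesis unfolding D mc by (simp add: algebra_simps)
      qed
      hence "int p dvd m * (\<Sum>k<p*p. int (f (\<alpha> k x) (\<beta> k y))) - int x * int y" by simp
      thus ?thesis by (simp add: mod_eq_dvd_iff)
    qed
    show "PR p a b x y =
      measure_pmf.expectation (return_pmf 0)
       (\<lambda>l. wiring_prob (functional_box p f) p (p*p) (\<lambda>l x as. \<alpha> (length as) x)
              (\<lambda>l x as. nat ((m * int (sum_list as) + 0) mod int p))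
              (\<lambda>l y bs. \<beta> (length bs) y)
              (\<lambda>l y bs. nat ((m * int (sum_list bs) + 0) mod int p)) l a b x y)"
      unfolding expectation_return_pmf FB_qb M
      using wiring[where F="\<lambda>u v. int (f u v)" and w=m and s="\<lambda>_. 0" and t="\<lambda>_. 0"
          and \<alpha>=\<alpha> and \<beta>=\<beta> and M=M, OF p copm a b] M[symmetric] key
      by (simp add: PR_box_def)
  qed
qed

theorem lemma1:
  fixes p :: nat and f :: "nat \<Rightarrow> nat \<Rightarrow> nat"
  assumes "prime p"
    and "\<forall>x<p. \<forall>y<p. f x y < p"
  shows "(add_separable p f \<longrightarrow> local_box p (functional_box p f)) \<and>
         (\<not> add_separable p f \<longrightarrow>
            simulates p (functional_box p f) (PR p) \<and> simulates p (PR p) (functional_box p f))"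
proof -
  have p2: "p \<ge> 2" using assms(1) by (simp add: prime_ge_2_nat)
  show ?thesis using part1[of p f] part2a[OF p2, of f] part2b[OF assms(1), of f] p2 by auto
qed

end
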